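(* Let $G$ be a finite group and $p$ a prime. The power graph $P(G)$ contains no induced subgraph isomorphic to the path $P_4$ on four vertices, nor to the $4$-cycle $C_4$, whose four vertices are all elements of $G$ whose orders are powers of $p$.
   Context: The power graph $P(G)$ of a group $G$ has vertex set $G$, with distinct $u,v$ adjacent if and only if $u=v^i$ or $v=u^j$ for some integers $i,j$. *)

theory Defs
  imports "HOL-Algebra.Algebra"
begin

definition power_adj :: "('a, 'b) monoid_scheme \<Rightarrow> 'a \<Rightarrow> 'a \<Rightarrow> bool" where
  "power_adj G u v \<longleftrightarrow> u \<in> carrier G \<and> v \<in> carrier G \<and> u \<noteq> v \<and>
     ((\<exists>i::int. u = v [^]\<^bsub>G\<^esub> i) \<or> (\<exists>j::int. v = u [^]\<^bsub>G\<^esub> j))"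

definition induces_P4 :: "('a, 'b) monoid_scheme \<Rightarrow> 'a \<Rightarrow> 'a \<Rightarrow> 'a \<Rightarrow> 'a \<Rightarrow> bool" where
  "induces_P4 G a b c d \<longleftrightarrow> distinct [a, b, c, d] \<and>
     power_adj G a b \<and> power_adj G b c \<and> power_adj G c d \<and>
     \<not> power_adj G a c \<and> \<not> power_adj G b d \<and> \<not> power_adj G a d"

definition induces_C4 :: "('a, 'b) monoid_scheme \<Rightarrow> 'a \<Rightarrow> 'a \<Rightarrow> 'a \<Rightarrow> 'a \<Rightarrow> bool" where
  "induces_C4 G a b c d \<longleftrightarrow> distinct [a, b, c, d] \<and>
     power_adj G a b \<and> power_adj G b c \<and> power_adj G c d \<and> power_adj G d a \<and>
     \<not> power_adj G a c \<and> \<not> power_adj G b d"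

definition p_elem :: "('a, 'b) monoid_scheme \<Rightarrow> nat \<Rightarrow> 'a \<Rightarrow> bool" where
  "p_elem G p x \<longleftrightarrow> x \<in> carrier G \<and> (\<exists>k::nat. group.ord G x = p ^ k)"

end

theory Submission
  imports Defs "HOL-Computational_Algebra.Primes"
begin

lemma (in group) pow_gcd_in:
  assumes z: "z \<in> carrier G" and d: "gcd i (int (ord z)) dvd a"
  shows "\<exists>s::int. z [^] a = (z [^] i) [^] s"
proof -
  obtain u v where uv: "u * i + v * int (ord z) = gcd i (int (ord z))"
    using bezout_int by blast
  obtain m where m: "a = gcd i (int (ord z)) * m" using d by blast
  have a: "a = i * (u*m) + int (ord z) * (v*m)" using m uv by (simp add: algebra_simps flip: uv)
  have one: "z [^] (int (ord z) * (v*m)) = \<one>"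
    using z int_pow_eq_id by simp
  have "z [^] a = z [^] (i * (u*m)) \<otimes> z [^] (int (ord z) * (v*m))"
    using a z int_pow_mult by simp
  also have "\<dots> = (z [^] i) [^] (u*m)" using one z int_pow_pow by simp
  finally show ?thesis by blast
qed

lemma (in group) chain:
  assumes z: "z \<in> carrier G" and o: "ord z = p ^ k" and p: "Factorial_Ring.prime p"
    and x: "x = z [^] (i::int)" and y: "y = z [^] (j::int)"
  shows "(\<exists>s::int. x = y [^] s) \<or> (\<exists>s::int. y = x [^] s)"
proof -
  let ?n = "int (p ^ k)"
  have g1: "nat (gcd i ?n) dvd p ^ k"
    by (metis gcd_dvd2 int_dvd_int_iff nat_0_le gcd_ge_0_int)
  have g2: "nat (gcd j ?n) dvd p ^ k"
    by (metis gcd_dvd2 int_dvd_int_iff nat_0_le gcd_ge_0_int)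
  obtain a where a: "nat (gcd i ?n) = p ^ a" using g1 divides_primepow_nat[OF p] by blast
  obtain b where b: "nat (gcd j ?n) = p ^ b" using g2 divides_primepow_nat[OF p] by blast
  show ?thesis
  proof (cases "a \<le> b")
    case True
    have "p ^ a dvd p ^ b" using True by (simp add: le_imp_power_dvd)
    hence "gcd i ?n dvd gcd j ?n" using a b
      by (metis gcd_ge_0_int int_dvd_int_iff nat_0_le)
    hence "gcd i (int (ord z)) dvd j" using o by (metis dvd_trans gcd_dvd1)
    then show ?thesis using pow_gcd_in[OF z] x y by blast
  next
    case False
    have "p ^ b dvd p ^ a" using False by (simp add: le_imp_power_dvd)
    hence "gcd j ?n dvd gcd i ?n" using a b
      by (metis gcd_ge_0_int int_dvd_int_iff nat_0_le)
    hence "gcd j (int (ord z)) dvd i" using o by (metis dvd_trans gcd_dvd1)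
    then show ?thesis using pow_gcd_in[OF z] x y by blast
  qed
qed

lemma abstract4:
  fixes R :: "'a \<Rightarrow> 'a \<Rightarrow> bool"
  assumes tr: "\<And>x y z. R x y \<Longrightarrow> R y z \<Longrightarrow> R x z"
    and ch: "\<And>x y z. R x z \<Longrightarrow> R y z \<Longrightarrow> R x y \<or> R y x"
  shows "\<not> ((R a b \<or> R b a) \<and> (R b c \<or> R c b) \<and> (R c d \<or> R d c)
           \<and> \<not> (R a c \<or> R c a) \<and> \<not> (R b d \<or> R d b) \<and> \<not> (R a d \<or> R d a))"
    and "\<not> ((R a b \<or> R b a) \<and> (R b c \<or> R c b) \<and> (R c d \<or> R d c) \<and> (R d a \<or> R a d)
           \<and> \<not> (R a c \<or> R c a) \<and> \<not> (R b d \<or> R d b))"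
  using tr ch by metis+

theorem mainTheorem4:
  fixes G (structure) and p :: nat
  assumes "group G" and "finite (carrier G)" and "Factorial_Ring.prime p"
  shows "\<not> (\<exists>a b c d. p_elem G p a \<and> p_elem G p b \<and> p_elem G p c \<and> p_elem G p d \<and>
              (induces_P4 G a b c d \<or> induces_C4 G a b c d))"
proof
  interpret group G by fact
  assume "\<exists>a b c d. p_elem G p a \<and> p_elem G p b \<and> p_elem G p c \<and> p_elem G p d \<and>
              (induces_P4 G a b c d \<or> induces_C4 G a b c d)"
  then obtain a b c d where e: "p_elem G p a" "p_elem G p b" "p_elem G p c" "p_elem G p d"
    and h: "induces_P4 G a b c d \<or> induces_C4 G a b c d" by blast
  define S where "S = {a, b, c, d}"
  define R where "R x y \<longleftrightarrow> x \<in> S \<and> y \<in> S \<and> (\<exists>i::int. x = y [^] i)" for x y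
  have pe: "p_elem G p x" if "x \<in> S" for x using that e S_def by auto
  have tr: "R x z" if H: "R x y" "R y z" for x y z
  proof -
    obtain i j where "x = y [^] (i::int)" "y = z [^] (j::int)" using H R_def by blast
    moreover have "z \<in> S" using H R_def by blast
    then have "p_elem G p z" using pe by blast
    then have "z \<in> carrier G" unfolding p_elem_def by blast
    ultimately have "x = z [^] (j * i)" by (simp add: int_pow_pow)
    then show ?thesis using H R_def by blast
  qed
  have ch: "R x y \<or> R y x" if H: "R x z" "R y z" for x y z
  proof -
    obtain i j where "x = z [^] (i::int)" "y = z [^] (j::int)" using H R_def by blast
    moreover have "z \<in> S" using H R_def by blast
    then have "p_elem G p z" using pe by blast
    then obtain k where "z \<in> carrier G" "ord z = p ^ k" unfolding p_elem_def by blast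
    ultimately show ?thesis using chain[OF _ _ assms(3)] H R_def by metis
  qed
  have adj: "power_adj G x y \<longleftrightarrow> x \<noteq> y \<and> (R x y \<or> R y x)" if "x \<in> S" "y \<in> S" for x y
    using that pe unfolding power_adj_def R_def p_elem_def by blast
  have inS: "a \<in> S" "b \<in> S" "c \<in> S" "d \<in> S" by (auto simp: S_def)
  show False using h abstract4(1)[of R a b c d, OF tr ch] abstract4(2)[of R a b c d, OF tr ch]
    unfolding induces_P4_def induces_C4_def adj[OF inS(1) inS(2)] adj[OF inS(2) inS(3)]
      adj[OF inS(3) inS(4)] adj[OF inS(1) inS(3)] adj[OF inS(2) inS(4)] adj[OF inS(1) inS(4)]
      adj[OF inS(4) inS(1)]
    by auto
qed

end
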